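(* Let $t$ be a positive integer, $n_1,\dots,n_t$ positive integers, and $h_1,\dots,h_t\in\mathbb{R}^d$. Suppose that the subgroup $G=h_1\mathbb{Z}+\dots+h_t\mathbb{Z}$ of $\mathbb{R}^d$ has Euclidean closure $\overline{G}=V\oplus\Lambda$, where $V$ is a proper vector subspace of $\mathbb{R}^d$ and $\Lambda$ is a discrete additive subgroup of $\mathbb{R}^d$. Then there exist a finite dimensional linear subspace $H\subseteq C(\mathbb{R}^d)$ with $\bigcup_{k=1}^t\Delta_{h_k}(H)\subseteq H$ and a continuous function $\varphi:\mathbb{R}^d\to\mathbb{R}$ with $\Delta_{h_k}^{n_k}\varphi\in H$ for $k=1,\dots,t$, such that $\varphi$ is not an exponential polynomial on $\mathbb{R}^d$.
   Context: $C(\mathbb{R}^d)$ is the space of continuous complex valued functions on $\mathbb{R}^d$; $(\Delta_hf)(x)=f(x+h)-f(x)$ and $\Delta_h^m$ is its $m$-fold composition. An exponential polynomial on $\mathbb{R}^d$ is a function of the form $x\mapsto\sum_{j=1}^r p_j(x)e^{\langle\lambda_j,x\rangle}$ with polynomials $p_j$ and $\lambda_j\in\mathbb{C}^d$. *)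

theory Defs
  imports "HOL-Analysis.Analysis"
begin

definition diff_op :: "real^'n \<Rightarrow> (real^'n \<Rightarrow> complex) \<Rightarrow> (real^'n \<Rightarrow> complex)" where
  "diff_op h f = (\<lambda>x. f (x + h) - f x)"

definition diff_pow :: "real^'n \<Rightarrow> nat \<Rightarrow> (real^'n \<Rightarrow> complex) \<Rightarrow> (real^'n \<Rightarrow> complex)" where
  "diff_pow h m = (diff_op h ^^ m)"

definition fin_dim_cont_subspace :: "(real^'n \<Rightarrow> complex) set \<Rightarrow> bool" where
  "fin_dim_cont_subspace H \<longleftrightarrow>
     (\<exists>B. finite B \<and> (\<forall>b\<in>B. continuous_on UNIV b) \<and>
          H = {(\<lambda>x. \<Sum>b\<in>B. c b * b x) | c. True})"

definition poly_fun :: "(real^'n \<Rightarrow> complex) \<Rightarrow> bool" where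
  "poly_fun p \<longleftrightarrow> (\<exists>A c. finite A \<and>
     p = (\<lambda>x. \<Sum>\<alpha>\<in>A. c \<alpha> * (\<Prod>i\<in>UNIV. (complex_of_real (x $ i)) ^ (\<alpha> i :: nat))))"

definition exp_poly :: "(real^'n \<Rightarrow> complex) \<Rightarrow> bool" where
  "exp_poly f \<longleftrightarrow> (\<exists>r p lam. (\<forall>j<r. poly_fun (p j)) \<and>
     f = (\<lambda>x. \<Sum>j<(r::nat). p j x * exp (\<Sum>i\<in>UNIV. (lam j :: complex^'n) $ i * complex_of_real (x $ i))))"

definition add_subgroup :: "(real^'n) set \<Rightarrow> bool" where
  "add_subgroup L \<longleftrightarrow> 0 \<in> L \<and> (\<forall>x\<in>L. \<forall>y\<in>L. x + y \<in> L \<and> x - y \<in> L)"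

definition discrete_set :: "(real^'n) set \<Rightarrow> bool" where
  "discrete_set L \<longleftrightarrow> (\<forall>x\<in>L. \<not> x islimpt L)"

definition gen_group :: "nat \<Rightarrow> (nat \<Rightarrow> real^'n) \<Rightarrow> (real^'n) set" where
  "gen_group t h = {(\<Sum>k\<in>{1..t}. of_int (m k) *\<^sub>R h k) | m. True}"

end

theory Submission
  imports Defs "HOL-Complex_Analysis.Complex_Analysis"
begin

lemma not_exp_poly_aux:
  fixes f :: "real^'d \<Rightarrow> complex" and p :: "real^'d"
  assumes eps: "\<epsilon> > 0" and zero: "\<And>s. \<bar>s\<bar> < \<epsilon> \<Longrightarrow> f (s *\<^sub>R p) = 0"
    and nz: "f p \<noteq> 0"
  shows "\<not> exp_poly f"
proof
  assume "exp_poly f"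
  then obtain r pp lam where poly: "\<forall>j<r. poly_fun (pp j)" and
    feq: "f = (\<lambda>x. \<Sum>j<(r::nat). pp j x * exp (\<Sum>i\<in>UNIV. (lam j :: complex^'d) $ i * complex_of_real (x $ i)))"
    unfolding exp_poly_def by blast
  have "\<forall>j. \<exists>Ac. j < r \<longrightarrow> pp j = (\<lambda>x. \<Sum>\<alpha>\<in>fst Ac. snd Ac \<alpha> * (\<Prod>i\<in>UNIV. (complex_of_real (x $ i)) ^ (\<alpha> i :: nat)))"
  proof
    fix j
    show "\<exists>Ac. j < r \<longrightarrow> pp j = (\<lambda>x. \<Sum>\<alpha>\<in>fst Ac. snd Ac \<alpha> * (\<Prod>i\<in>UNIV. (complex_of_real (x $ i)) ^ (\<alpha> i :: nat)))"
    proof (cases "j < r")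
      case True
      then obtain A c where "pp j = (\<lambda>x. \<Sum>\<alpha>\<in>A. c \<alpha> * (\<Prod>i\<in>UNIV. (complex_of_real (x $ i)) ^ (\<alpha> i :: nat)))"
        using poly unfolding poly_fun_def by blast
      then show ?thesis by (intro exI[of _ "(A,c)"]) simp
    qed simp
  qed
  then obtain Ac where Ac: "\<And>j. j < r \<Longrightarrow> pp j = (\<lambda>x. \<Sum>\<alpha>\<in>fst (Ac j). snd (Ac j) \<alpha> * (\<Prod>i\<in>UNIV. (complex_of_real (x $ i)) ^ (\<alpha> i :: nat)))"
    by metis
  define F where "F = (\<lambda>z::complex. \<Sum>j<r. (\<Sum>\<alpha>\<in>fst (Ac j). snd (Ac j) \<alpha> * (\<Prod>i\<in>UNIV. (z * complex_of_real (p $ i)) ^ (\<alpha> i :: nat)))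
        * exp (\<Sum>i\<in>UNIV. lam j $ i * (z * complex_of_real (p $ i))))"
  have Fs: "F (complex_of_real s) = f (s *\<^sub>R p)" for s
    unfolding F_def feq
    by (intro sum.cong refl) (simp add: Ac)
  have hol: "F holomorphic_on UNIV"
    unfolding F_def by (intro holomorphic_intros)
  let ?U = "{z. \<exists>s. z = complex_of_real s \<and> \<bar>s\<bar> < \<epsilon>}"
  have lim: "0 islimpt ?U"
    unfolding islimpt_approachable
  proof (intro allI impI)
    fix e :: real assume "e > 0"
    let ?s = "min e \<epsilon> / 2"
    have "complex_of_real ?s \<in> ?U" using eps \<open>e>0\<close> by (intro CollectI exI[of _ ?s]) auto
    moreover have "complex_of_real ?s \<noteq> 0" "dist (complex_of_real ?s) 0 < e"
      using eps \<open>e>0\<close> by auto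
    ultimately show "\<exists>x'\<in>?U. x' \<noteq> 0 \<and> dist x' 0 < e" by blast
  qed
  have "F 1 = 0"
    by (rule analytic_continuation[OF hol open_UNIV connected_UNIV _ _ lim])
       (auto simp: Fs zero)
  moreover have "F 1 = f p" using Fs[of 1] by simp
  ultimately show False using nz by simp
qed

lemma countable_L:
  fixes L :: "(real^'d) set"
  assumes "add_subgroup L" "discrete_set L"
  shows "countable L"
proof -
  have L0: "0 \<in> L" and Lsub: "\<And>x y. x \<in> L \<Longrightarrow> y \<in> L \<Longrightarrow> x - y \<in> L"
    using assms(1) unfolding add_subgroup_def by auto
  have "\<not> 0 islimpt L" using assms(2) L0 unfolding discrete_set_def by blast
  then obtain e where e1: "e > 0" and e2: "\<forall>x'\<in>L. \<not> (x' \<noteq> 0 \<and> dist x' 0 < e)"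
    unfolding islimpt_approachable by blast
  have e: "e > 0" "\<And>x. x \<in> L \<Longrightarrow> x \<noteq> 0 \<Longrightarrow> dist x 0 \<ge> e"
    using e1 e2 by (auto simp: not_less)
  have sep: "dist x y \<ge> e" if "x \<in> L" "y \<in> L" "x \<noteq> y" for x y
  proof -
    have "dist (x - y) 0 \<ge> e" using e(2)[OF Lsub[OF that(1,2)]] that(3) by auto
    then show ?thesis by (simp add: dist_norm)
  qed
  define B where "B = (\<lambda>x::real^'d. ball x (e/2))"
  have inj: "inj_on B L"
  proof (rule inj_onI)
    fix x y assume "x \<in> L" "y \<in> L" "B x = B y"
    have "x \<in> B x" using e(1) unfolding B_def by simp
    then have "x \<in> ball y (e/2)" using \<open>B x = B y\<close> unfolding B_def by simp
    then show "x = y" using sep[OF \<open>x\<in>L\<close> \<open>y\<in>L\<close>] e(1) by (auto simp: dist_commute)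
  qed
  have "pairwise disjnt (B ` L)"
  proof (rule pairwiseI)
    fix X Y assume "X \<in> B ` L" "Y \<in> B ` L" "X \<noteq> Y"
    then obtain x y where xy: "x \<in> L" "y \<in> L" "X = B x" "Y = B y" "x \<noteq> y" by auto
    show "disjnt X Y"
    proof (rule ccontr)
      assume "\<not> disjnt X Y"
      then obtain z where "dist x z < e/2" "dist y z < e/2" using xy unfolding B_def disjnt_def by auto
      then have "dist x y < e" by (metis dist_commute dist_triangle_half_l)
      then show False using sep[OF xy(1,2,5)] by simp
    qed
  qed
  then have "countable (B ` L)"
    by (intro countable_disjoint_open_subsets) (auto simp: B_def)
  then show ?thesis by (rule countable_image_inj_on[OF _ inj])
qed

lemma sum_ne_UNIV:
  fixes V L :: "(real^'d) set"
  assumes "subspace V" "V \<noteq> UNIV" "countable L"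
  shows "{v + l | v l. v \<in> V \<and> l \<in> L} \<noteq> UNIV"
proof
  assume eq: "{v + l | v l. v \<in> V \<and> l \<in> L} = UNIV"
  obtain w where w: "w \<notin> V" using assms(2) by blast
  have "\<forall>s::real. \<exists>l. \<exists>v. v \<in> V \<and> l \<in> L \<and> s *\<^sub>R w = v + l"
  proof
    fix s :: real
    have "s *\<^sub>R w \<in> {v + l | v l. v \<in> V \<and> l \<in> L}" using eq by simp
    then show "\<exists>l. \<exists>v. v \<in> V \<and> l \<in> L \<and> s *\<^sub>R w = v + l" by blast
  qed
  then obtain g where g0: "\<forall>s. \<exists>v. v \<in> V \<and> g s \<in> L \<and> s *\<^sub>R w = v + g s"
    using choice[of "\<lambda>s l. \<exists>v. v \<in> V \<and> l \<in> L \<and> s *\<^sub>R w = v + l"] by blast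
  then have g: "\<exists>v. v \<in> V \<and> g s \<in> L \<and> s *\<^sub>R w = v + g s" for s by blast
  have injg: "inj g"
  proof (rule injI)
    fix s s' assume gs: "g s = g s'"
    obtain v where v: "v \<in> V" "s *\<^sub>R w = v + g s" using g[of s] by blast
    obtain v' where v': "v' \<in> V" "s' *\<^sub>R w = v' + g s'" using g[of s'] by blast
    have "(s - s') *\<^sub>R w = v - v'" using gs v(2) v'(2) by (simp add: algebra_simps)
    moreover have "v - v' \<in> V" using assms(1) \<open>v\<in>V\<close> \<open>v'\<in>V\<close> by (simp add: subspace_diff)
    ultimately have "(s - s') *\<^sub>R w \<in> V" by simp
    show "s = s'"
    proof (rule ccontr)
      assume "s \<noteq> s'"
      have "inverse (s - s') *\<^sub>R ((s - s') *\<^sub>R w) \<in> V"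
        by (rule subspace_scale[OF assms(1) \<open>(s - s') *\<^sub>R w \<in> V\<close>])
      then show False using w \<open>s \<noteq> s'\<close> by simp
    qed
  qed
  have rg: "range g \<subseteq> L" using g by blast
  have "countable (range g)" by (rule countable_subset[OF rg assms(3)])
  then have "countable (UNIV :: real set)"
    by (rule countable_image_inj_on[OF _ injg])
  then show False using uncountable_UNIV_real by blast
qed

lemma infdist_shift:
  fixes K :: "'a::real_normed_vector set"
  assumes "g \<in> K" "\<And>a b. a \<in> K \<Longrightarrow> b \<in> K \<Longrightarrow> a + b \<in> K" "\<And>a. a \<in> K \<Longrightarrow> - a \<in> K"
  shows "infdist (x + g) K = infdist x K"
proof -
  have le: "infdist (y + c) K \<le> infdist y K" if "c \<in> K" for y c
  proof -
    have ne: "K \<noteq> {}" using that by blast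
    have "infdist (y + c) K \<le> dist y a" if "a \<in> K" for a
    proof -
      have "infdist (y + c) K \<le> dist (y + c) (a + c)" using assms(2)[OF \<open>a\<in>K\<close> \<open>c\<in>K\<close>] by (rule infdist_le)
      also have "\<dots> = dist y a" by (simp add: dist_norm)
      finally show ?thesis .
    qed
    then show ?thesis unfolding infdist_notempty[OF ne] by (intro cINF_greatest ne) auto
  qed
  have "infdist x K = infdist ((x + g) + (- g)) K" by simp
  also have "\<dots> \<le> infdist (x + g) K" using le assms(3)[OF assms(1)] by blast
  finally show ?thesis using le[OF assms(1), of x] by linarith
qed

lemma diff_pow_zero:
  assumes "\<And>x. f (x + h) = f x" "m \<ge> 1"
  shows "diff_pow h m f = (\<lambda>x. 0)"
proof -
  have z: "(diff_op h ^^ k) (\<lambda>x. 0) = (\<lambda>x. 0)" for k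
    by (induction k) (simp_all add: diff_op_def)
  obtain k where "m = Suc k" using assms(2) by (cases m) auto
  then show ?thesis unfolding diff_pow_def
    by (simp add: funpow_Suc_right diff_op_def assms(1) z del: funpow.simps)
qed

theorem proposition7:
  fixes t :: nat and n :: "nat \<Rightarrow> nat" and h :: "nat \<Rightarrow> real^'d"
    and V L :: "(real^'d) set"
  assumes "t \<ge> 1"
    and "\<forall>k\<in>{1..t}. n k \<ge> 1"
    and "subspace V" and "V \<noteq> UNIV"
    and "add_subgroup L" and "discrete_set L"
    and "V \<inter> L = {0}"
    and "closure (gen_group t h) = {v + l | v l. v \<in> V \<and> l \<in> L}"
  shows "\<exists>H (\<phi> :: real^'d \<Rightarrow> real).
           fin_dim_cont_subspace H \<and>
           (\<forall>k\<in>{1..t}. \<forall>f\<in>H. diff_op (h k) f \<in> H) \<and>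
           continuous_on UNIV \<phi> \<and>
           (\<forall>k\<in>{1..t}. diff_pow (h k) (n k) (\<lambda>x. complex_of_real (\<phi> x)) \<in> H) \<and>
           \<not> exp_poly (\<lambda>x. complex_of_real (\<phi> x))"
proof -
  define K where "K = closure (gen_group t h)"
  have Kc: "closed K" unfolding K_def by simp
  have L0: "0 \<in> L" and Lops: "\<And>x y. x \<in> L \<Longrightarrow> y \<in> L \<Longrightarrow> x + y \<in> L \<and> x - y \<in> L"
    using assms(5) unfolding add_subgroup_def by auto
  have V0: "0 \<in> V" using assms(3) by (simp add: subspace_0)
  have K0: "0 \<in> K" unfolding K_def assms(8) using L0 V0 by force
  have Kadd: "a + b \<in> K" if ab: "a \<in> K" "b \<in> K" for a b
  proof -
    obtain v l v' l' where "a = v + l" "b = v' + l'" "v \<in> V" "l \<in> L" "v' \<in> V" "l' \<in> L"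
      using ab unfolding K_def assms(8) by blast
    moreover have "v + v' \<in> V" using assms(3) \<open>v\<in>V\<close> \<open>v'\<in>V\<close> by (simp add: subspace_add)
    moreover have "l + l' \<in> L" using Lops \<open>l\<in>L\<close> \<open>l'\<in>L\<close> by blast
    moreover have "a + b = (v + v') + (l + l')" using \<open>a = v + l\<close> \<open>b = v' + l'\<close> by (simp add: algebra_simps)
    ultimately show ?thesis unfolding K_def assms(8) by blast
  qed
  have Kneg: "- a \<in> K" if a: "a \<in> K" for a
  proof -
    obtain v l where "a = v + l" "v \<in> V" "l \<in> L"
      using a unfolding K_def assms(8) by blast
    moreover have "- v \<in> V" using assms(3) \<open>v\<in>V\<close> by (simp add: subspace_neg)
    moreover have "0 - l \<in> L" using Lops L0 \<open>l\<in>L\<close> by blast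
    moreover have "- a = (- v) + (0 - l)" using \<open>a = v + l\<close> by (simp add: algebra_simps)
    ultimately show ?thesis unfolding K_def assms(8) by blast
  qed
  have hK: "h k \<in> K" if "k \<in> {1..t}" for k
  proof -
    have "(\<Sum>j\<in>{1..t}. of_int (if j = k then 1 else 0) *\<^sub>R h j) = (\<Sum>j\<in>{1..t}. if j = k then h j else 0)"
      by (intro sum.cong) auto
    also have "\<dots> = h k" using that by simp
    finally have hsum: "(\<Sum>j\<in>{1..t}. of_int (if j = k then 1 else 0) *\<^sub>R h j) = h k" .
    then have "h k \<in> gen_group t h" unfolding gen_group_def
      by (intro CollectI exI[of _ "\<lambda>j. if j = k then 1 else 0"] conjI) (simp_all only: hsum[symmetric])
    then show ?thesis unfolding K_def using closure_subset by blast
  qed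
  have "K \<noteq> UNIV" unfolding K_def assms(8)
    using sum_ne_UNIV[OF assms(3,4) countable_L[OF assms(5,6)]] .
  then obtain p where p: "p \<notin> K" by blast
  define \<delta> where "\<delta> = infdist p K"
  have \<delta>: "\<delta> > 0" unfolding \<delta>_def using infdist_pos_not_in_closed[OF Kc _ p] K0 by blast
  define \<phi> where "\<phi> = (\<lambda>x. max 0 (infdist x K - \<delta>/2))"
  have cont: "continuous_on UNIV \<phi>" unfolding \<phi>_def by (intro continuous_intros)
  have per: "\<phi> (x + h k) = \<phi> x" if "k \<in> {1..t}" for k x
    unfolding \<phi>_def using infdist_shift[OF hK[OF that] Kadd Kneg] by simp
  have notexp: "\<not> exp_poly (\<lambda>x. complex_of_real (\<phi> x))"
  proof (rule not_exp_poly_aux[of "\<delta> / 2 / (norm p + 1)" _ p])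
    have np: "norm p + 1 > 0" using norm_ge_zero[of p] by linarith
    show "\<delta> / 2 / (norm p + 1) > 0" by (intro divide_pos_pos) (use \<delta> np in auto)
    show "complex_of_real (\<phi> p) \<noteq> 0" unfolding \<phi>_def \<delta>_def[symmetric] using \<delta> by simp
    fix s :: real assume s: "\<bar>s\<bar> < \<delta> / 2 / (norm p + 1)"
    have "infdist (s *\<^sub>R p) K \<le> dist (s *\<^sub>R p) 0" using K0 by (rule infdist_le)
    also have "\<dots> = \<bar>s\<bar> * norm p" by simp
    also have "\<dots> \<le> \<bar>s\<bar> * (norm p + 1)" by (simp add: mult_left_mono)
    also have "\<dots> < \<delta> / 2" using s pos_less_divide_eq[OF np] by blast
    finally show "complex_of_real (\<phi> (s *\<^sub>R p)) = 0" unfolding \<phi>_def by simp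
  qed
  define H where "H = {(\<lambda>x::real^'d. 0::complex)}"
  have fd: "fin_dim_cont_subspace H"
    unfolding fin_dim_cont_subspace_def H_def by (intro exI[of _ "{}"]) auto
  have inv: "\<forall>k\<in>{1..t}. \<forall>f\<in>H. diff_op (h k) f \<in> H"
    unfolding H_def by (simp add: diff_op_def)
  have dp: "\<forall>k\<in>{1..t}. diff_pow (h k) (n k) (\<lambda>x. complex_of_real (\<phi> x)) \<in> H"
  proof
    fix k assume k: "k \<in> {1..t}"
    have "diff_pow (h k) (n k) (\<lambda>x. complex_of_real (\<phi> x)) = (\<lambda>x. 0)"
      by (rule diff_pow_zero) (use per[OF k] assms(2) k in auto)
    then show "diff_pow (h k) (n k) (\<lambda>x. complex_of_real (\<phi> x)) \<in> H" unfolding H_def by simp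
  qed
  show ?thesis by (rule exI[of _ H], rule exI[of _ \<phi>]) (intro conjI fd inv cont dp notexp)
qed

end
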